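(* Let $0<b<a$. There exist $n_0=n_0(a/b)$ and a constant $c(a,b)<\pi$ such that the following holds for every $n>n_0$: if $Q(x)=\sum_{j=0}^n c_jx^j$ is any real polynomial of degree $n$ with $|Q(z_0)|=a^n$ for some $z_0\in[-1,1]$, then $$\big|\{\theta\in(0,\pi):\ |Q(\cos\theta)|<b^n\}\big|\le c(a,b).$$
   Context: $|\cdot|$ denotes Lebesgue measure. *)

theory Defs
  imports "HOL-Analysis.Analysis" "HOL-Computational_Algebra.Polynomial"
begin

end

theory Submission
  imports Defs
begin

lemma sin_ge_half:
  fixes x :: real assumes "0 \<le> x" "x \<le> 17/10"
  shows "x / 2 \<le> sin x"
proof -
  have M: "\<bar>sin x - (\<Sum>m<3. sin_coeff m * x ^ m)\<bar> \<le> inverse (fact 3) * \<bar>x\<bar> ^ 3"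
    by (rule Maclaurin_sin_bound)
  have S: "(\<Sum>m<3. sin_coeff m * x ^ m) = x"
    by (simp add: sin_coeff_def eval_nat_numeral)
  have F: "inverse (fact 3) * \<bar>x\<bar> ^ 3 = x^3/6" using assms
    by (simp add: numeral_3_eq_3 field_simps)
  have "\<bar>sin x - x\<bar> \<le> x^3/6" using M unfolding S F .
  hence "x - x^3/6 \<le> sin x" by linarith
  moreover have "x^3/6 \<le> x/2"
  proof -
    have "x*x \<le> (17/10)*(17/10)" using assms by (intro mult_mono) auto
    hence "x^2 \<le> 3" by (simp add: power2_eq_square)
    hence "x * x^2 \<le> x * 3" using assms by (intro mult_left_mono) auto
    thus ?thesis by (simp add: eval_nat_numeral)
  qed
  ultimately show ?thesis by linarith
qed

lemma abs_sin_ge_half: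
  fixes x :: real assumes "\<bar>x\<bar> \<le> pi/2"
  shows "\<bar>x\<bar> / 2 \<le> \<bar>sin x\<bar>"
proof -
  have "pi/2 \<le> 17/10" using pi_approx by (simp add: abs_le_iff)
  show ?thesis
  proof (cases "x \<ge> 0")
    case True thus ?thesis using sin_ge_half[of x] assms \<open>pi/2 \<le> 17/10\<close> by auto
  next
    case False thus ?thesis using sin_ge_half[of "-x"] assms \<open>pi/2 \<le> 17/10\<close> by auto
  qed
qed

lemma norm_cis_diff: "norm (cis a - cis b) = 2 * \<bar>sin ((a - b) / 2)\<bar>"
proof -
  have "(norm (cis a - cis b))^2 = (cos a - cos b)^2 + (sin a - sin b)^2"
    by (simp add: cmod_def)
  also have "\<dots> = 2 - 2 * cos (a - b)"
    by (simp add: power2_eq_square cos_diff algebra_simps)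
  also have "cos (a - b) = 1 - 2 * (sin ((a-b)/2))^2"
  proof -
    have "a - b = 2 * ((a-b)/2)" by simp
    hence "cos (a - b) = cos (2 * ((a-b)/2))" by metis
    thus ?thesis by (simp only: cos_double_sin)
  qed
  finally have "(norm (cis a - cis b))^2 = (2 * \<bar>sin ((a - b) / 2)\<bar>)^2"
    by (simp add: power_mult_distrib)
  thus ?thesis by (rule power2_eq_imp_eq) auto
qed

lemma int_prod_bound:
  fixes u :: real and B :: "int set"
  assumes "finite B" "b0 \<notin> B" "\<forall>b\<in>B. \<bar>u - of_int b0\<bar> \<le> \<bar>u - of_int b\<bar>"
  shows "fact (card B) / 2^(card B) \<le> (\<Prod>b\<in>B. \<bar>u - of_int b\<bar>)"
  using assms
proof (induction "card B" arbitrary: B)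
  case 0 thus ?case by simp
next
  case (Suc n B)
  have ne: "B \<noteq> {}" using Suc.hyps(2) by auto
  have "Max ((\<lambda>b. \<bar>u - of_int b\<bar>) ` B) \<in> (\<lambda>b. \<bar>u - of_int b\<bar>) ` B"
    using Suc.prems(1) ne by (intro Max_in) auto
  then obtain bm where bm1: "bm \<in> B" and bmM: "\<bar>u - of_int bm\<bar> = Max ((\<lambda>b. \<bar>u - of_int b\<bar>) ` B)"
    by auto
  have bm: "bm \<in> B" "\<forall>b\<in>B. \<bar>u - of_int b\<bar> \<le> \<bar>u - of_int bm\<bar>"
    using bm1 bmM Suc.prems(1) by auto
  define \<rho> where "\<rho> = \<bar>u - of_int bm\<bar>"
  have sub: "insert b0 B \<subseteq> {\<lceil>u - \<rho>\<rceil>..\<lfloor>u + \<rho>\<rfloor>}"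
  proof
    fix k assume "k \<in> insert b0 B"
    hence "\<bar>u - of_int k\<bar> \<le> \<rho>" using bm Suc.prems(3) \<rho>_def by (auto intro: order.trans)
    thus "k \<in> {\<lceil>u - \<rho>\<rceil>..\<lfloor>u + \<rho>\<rfloor>}"
      by (auto simp: abs_le_iff ceiling_le_iff le_floor_iff)
  qed
  have "card (insert b0 B) \<le> card {\<lceil>u - \<rho>\<rceil>..\<lfloor>u + \<rho>\<rfloor>}"
    by (rule card_mono[OF _ sub]) simp
  also have "\<dots> = nat (\<lfloor>u + \<rho>\<rfloor> - \<lceil>u - \<rho>\<rceil> + 1)" by simp
  finally have "real (Suc (Suc n)) \<le> real_of_int (\<lfloor>u + \<rho>\<rfloor> - \<lceil>u - \<rho>\<rceil> + 1)"
    using Suc.hyps(2) Suc.prems by (simp add: card_insert_if)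
  also have "\<dots> \<le> 2 * \<rho> + 1"
    using of_int_floor_le[of "u+\<rho>"] le_of_int_ceiling[of "u - \<rho>"] by linarith
  finally have rho: "real (Suc n) / 2 \<le> \<rho>" by simp
  have IH: "fact (card (B - {bm})) / 2^(card (B - {bm})) \<le> (\<Prod>b\<in>B - {bm}. \<bar>u - of_int b\<bar>)"
    using Suc.hyps(1)[of "B - {bm}"] Suc.hyps(2) Suc.prems bm by auto
  have cB: "card (B - {bm}) = n" using Suc.hyps(2) bm by simp
  have "(\<Prod>b\<in>B. \<bar>u - of_int b\<bar>) = \<rho> * (\<Prod>b\<in>B - {bm}. \<bar>u - of_int b\<bar>)"
    using bm Suc.prems(1) \<rho>_def by (simp add: prod.remove)
  also have "\<dots> \<ge> (real (Suc n) / 2) * (fact n / 2^n)"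
    using IH cB rho by (intro mult_mono) auto
  finally show ?case using Suc.hyps(2)[symmetric] by (simp add: field_simps)
qed

definition grid :: "nat \<Rightarrow> real \<Rightarrow> nat \<Rightarrow> complex" where
  "grid M t k = cis (t + 2 * pi * real k / real M)"

lemma grid_pow: assumes "M > 0" shows "grid M t k ^ M = cis (real M * t)"
proof -
  have "grid M t k ^ M = cis (real M * t + 2 * pi * real k)"
    using assms unfolding grid_def Complex.DeMoivre by (simp add: algebra_simps)
  also have "\<dots> = cis (real M * t) * cis (2 * pi * real k)" by (rule cis_mult[symmetric])
  also have "cis (2 * pi * real k) = 1" by (rule cis_multiple_2pi) simp
  finally show ?thesis by simp
qed

lemma norm_grid [simp]: "norm (grid M t k) = 1"
  by (simp add: grid_def)

lemma grid_inj: assumes "M > 0" shows "inj_on (grid M t) {..<M}"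
proof (rule inj_onI)
  fix k l assume k: "k \<in> {..<M}" and l: "l \<in> {..<M}" and eq: "grid M t k = grid M t l"
  have "cis (t + 2 * pi * real k / real M) / cis (t + 2 * pi * real l / real M) = 1"
    using eq by (simp add: grid_def)
  hence "cis ((t + 2 * pi * real k / real M) - (t + 2 * pi * real l / real M)) = 1"
    by (simp only: cis_divide)
  hence "cos (2 * pi * (real k - real l) / real M) = 1"
    by (simp add: complex_eq_iff diff_divide_distrib right_diff_distrib)
  then obtain m :: int where m: "2 * pi * (real k - real l) / real M = of_int m * 2 * pi"
    by (auto simp: cos_one_2pi_int)
  hence "pi * (2 * (real k - real l - of_int m * real M)) = 0" using assms by (simp add: field_simps)
  hence "real k - real l = of_int m * real M" by simp
  hence "int k - int l = m * int M" by (metis of_int_eq_iff of_int_mult of_int_of_nat_eq of_int_diff)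
  moreover have "\<bar>int k - int l\<bar> < int M" using k l by auto
  ultimately have "\<bar>m\<bar> * int M < 1 * int M" by (simp add: abs_mult)
  hence "\<bar>m\<bar> < 1" by (simp only: mult_less_cancel_right)
  hence "m = 0" by simp
  thus "k = l" using \<open>int k - int l = m * int M\<close> by simp
qed

lemma grid_prod:
  assumes "M > 0"
  shows "(\<Prod>k<M. z - grid M t k) = z ^ M - cis (real M * t)"
proof -
  define p where "p = (\<Prod>k<M. [:- grid M t k, 1:])"
  define q where "q = (monom 1 M - [:cis (real M * t):] :: complex poly)"
  have degp: "degree p = M" unfolding p_def
    by (subst degree_prod_eq_sum_degree) auto
  have lcp: "lead_coeff p = 1" unfolding p_def by (simp add: lead_coeff_prod)
  have degq: "degree q \<le> M" unfolding q_def
    by (intro order.trans[OF degree_diff_le_max]) (auto simp: degree_monom_eq)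
  have cq: "coeff q M = 1" using assms unfolding q_def by (cases M) (auto simp: coeff_monom)
  have "p = q"
  proof (rule poly_eqI_degree_lead_coeff[where n = M and A = "grid M t ` {..<M}"])
    show "coeff p M = coeff q M" using degp lcp cq by simp
    show "M \<le> card (grid M t ` {..<M})" using card_image[OF grid_inj[OF assms]] by simp
    show "degree p \<le> M" using degp by simp
    show "degree q \<le> M" by fact
    fix z assume "z \<in> grid M t ` {..<M}"
    then obtain k where k: "k < M" "z = grid M t k" by auto
    have "poly p z = 0" unfolding p_def poly_prod using k by (auto intro!: prod_zero)
    moreover have "poly q z = 0" unfolding q_def using k grid_pow[OF assms]
      by (simp add: poly_monom)
    ultimately show "poly p z = poly q z" by simp
  qed
  hence "poly p z = poly q z" by simp
  thus ?thesis unfolding p_def q_def by (simp add: poly_prod poly_monom)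
qed

lemma grid_prod_except:
  assumes "M > 0" "j < M"
  shows "(\<Prod>k\<in>{..<M} - {j}. z - grid M t k) = (\<Sum>i<M. grid M t j ^ (M - Suc i) * z ^ i)"
proof -
  define w where "w = grid M t j"
  define P1 where "P1 = (\<Prod>k\<in>{..<M} - {j}. [:- grid M t k, 1:])"
  define P2 where "P2 = (\<Sum>i<M. monom (w ^ (M - Suc i)) i)"
  have "poly ([:-w, 1:] * P1) = poly ([:-w, 1:] * P2)"
  proof (rule ext)
    fix x
    have "poly ([:-w, 1:] * P1) x = (x - w) * (\<Prod>k\<in>{..<M} - {j}. x - grid M t k)"
      by (simp add: P1_def poly_prod algebra_simps)
    also have "\<dots> = (\<Prod>k<M. x - grid M t k)"
      unfolding w_def by (rule prod.remove[symmetric]) (use assms in auto)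
    also have "\<dots> = x ^ M - w ^ M" using grid_pow[OF assms(1)] grid_prod[OF assms(1)] by (simp add: w_def)
    also have "\<dots> = (x - w) * (\<Sum>i<M. w ^ (M - Suc i) * x ^ i)" by (rule power_diff_sumr2)
    also have "\<dots> = poly ([:-w, 1:] * P2) x"
      by (simp add: P2_def poly_sum poly_monom algebra_simps)
    finally show "poly ([:-w, 1:] * P1) x = poly ([:-w, 1:] * P2) x" .
  qed
  hence "[:-w, 1:] * P1 = [:-w, 1:] * P2" by (simp add: poly_eq_poly_eq_iff)
  moreover have "[:-w, 1:] \<noteq> 0" by simp
  ultimately have "P1 = P2" using mult_left_cancel by blast
  hence "poly P1 z = poly P2 z" by simp
  thus ?thesis by (simp add: P1_def P2_def poly_prod poly_sum poly_monom w_def)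
qed

lemma grid_prod_except_bound:
  assumes "M > 0" "j < M" "norm z = 1"
  shows "norm (\<Prod>k\<in>{..<M} - {j}. z - grid M t k) \<le> M"
proof -
  have "norm (\<Sum>i<M. grid M t j ^ (M - Suc i) * z ^ i) \<le> (\<Sum>i<M. norm (grid M t j ^ (M - Suc i) * z ^ i))"
    by (rule norm_sum)
  also have "\<dots> = M" using assms by (simp add: norm_mult norm_power)
  finally show ?thesis using grid_prod_except[OF assms(1,2)] by simp
qed

lemma grid_prod_except_self:
  assumes "M > 0" "j < M"
  shows "(\<Prod>k\<in>{..<M} - {j}. norm (grid M t j - grid M t k)) = M"
proof -
  have "(\<Prod>k\<in>{..<M} - {j}. norm (grid M t j - grid M t k)) = norm (\<Prod>k\<in>{..<M} - {j}. grid M t j - grid M t k)"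
    by (simp add: prod_norm)
  also have "\<dots> = norm (\<Sum>i<M. grid M t j ^ (M - Suc i) * grid M t j ^ i)"
    using grid_prod_except[OF assms] by simp
  also have "(\<Sum>i<M. grid M t j ^ (M - Suc i) * grid M t j ^ i) = (\<Sum>i<M. grid M t j ^ (M - 1))"
    by (intro sum.cong refl) (simp add: power_add[symmetric])
  also have "norm \<dots> = M" by (simp add: norm_power norm_mult)
  finally show ?thesis .
qed

definition gu :: "nat \<Rightarrow> real \<Rightarrow> real \<Rightarrow> real" where
  "gu M t \<theta> = (\<theta> - t) * real M / (2 * pi)"

definition grep :: "nat \<Rightarrow> real \<Rightarrow> real \<Rightarrow> nat \<Rightarrow> int" where
  "grep M t \<theta> k = int k - int M * round ((real k - gu M t \<theta>) / real M)"

lemma grep_close: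
  assumes "M > 0"
  shows "\<bar>gu M t \<theta> - of_int (grep M t \<theta> k)\<bar> \<le> real M / 2"
proof -
  define x where "x = (real k - gu M t \<theta>) / real M"
  have "gu M t \<theta> - of_int (grep M t \<theta> k) = real M * (of_int (round x) - x)"
    using assms by (simp add: grep_def x_def field_simps)
  hence "\<bar>gu M t \<theta> - of_int (grep M t \<theta> k)\<bar> = real M * \<bar>of_int (round x) - x\<bar>"
    by (simp add: abs_mult)
  also have "\<dots> \<le> real M * (1/2)"
    by (intro mult_left_mono of_int_round_abs_le) auto
  finally show ?thesis by simp
qed

lemma grep_mod:
  assumes "i < M"
  shows "grep M t \<theta> i mod int M = int i"
proof -
  have "grep M t \<theta> i = int i + (- round ((real i - gu M t \<theta>) / real M)) * int M"
    unfolding grep_def by (simp only: mult_minus_left mult.commute[of "int M"] diff_conv_add_uminus)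
  hence "grep M t \<theta> i mod int M = int i mod int M" by (simp only: mod_mult_self1)
  also have "int i mod int M = int i" using assms by (intro mod_pos_pos_trivial) auto
  finally show ?thesis .
qed

lemma grep_inj:
  assumes "M > 0"
  shows "inj_on (grep M t \<theta>) {..<M}"
proof (rule inj_onI)
  fix k l assume k: "k \<in> {..<M}" and l: "l \<in> {..<M}" and e: "grep M t \<theta> k = grep M t \<theta> l"
  have "int k = grep M t \<theta> k mod int M" using k grep_mod[of k M] by simp
  also have "\<dots> = grep M t \<theta> l mod int M" using e by simp
  also have "\<dots> = int l" using l grep_mod[of l M] by simp
  finally show "k = l" by simp
qed

lemma abs_sin_shift_int: "\<bar>sin (x - of_int m * pi)\<bar> = \<bar>sin x\<bar>"
proof -
  have s: "sin (of_int m * pi) = 0" by (simp add: sin_times_pi_eq_0)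
  hence "(cos (of_int m * pi))^2 = 1" using sin_cos_squared_add[of "of_int m * pi"] by simp
  hence "cos (of_int m * pi) = 1 \<or> cos (of_int m * pi) = -1" by (simp add: power2_eq_1_iff)
  hence c: "\<bar>cos (of_int m * pi)\<bar> = 1" by auto
  show ?thesis by (simp add: sin_diff s abs_mult c)
qed

lemma grid_chord_lower:
  assumes "M > 0"
  shows "2 * \<bar>gu M t \<theta> - of_int (grep M t \<theta> k)\<bar> / real M \<le> norm (cis \<theta> - grid M t k)"
proof -
  define u where "u = gu M t \<theta>"
  define R where "R = round ((real k - u) / real M)"
  have kR: "real k = of_int (grep M t \<theta> k) + real M * of_int R"
    by (simp add: grep_def R_def u_def)
  have "norm (cis \<theta> - grid M t k) = 2 * \<bar>sin ((\<theta> - (t + 2 * pi * real k / real M)) / 2)\<bar>"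
    by (simp add: grid_def norm_cis_diff)
  also have "(\<theta> - (t + 2 * pi * real k / real M)) / 2 = pi * (u - of_int (grep M t \<theta> k)) / real M - of_int R * pi"
    using assms by (simp add: u_def gu_def kR field_simps)
  also have "\<bar>sin (pi * (u - of_int (grep M t \<theta> k)) / real M - of_int R * pi)\<bar> = \<bar>sin (pi * (u - of_int (grep M t \<theta> k)) / real M)\<bar>"
    by (rule abs_sin_shift_int)
  finally have eq: "norm (cis \<theta> - grid M t k) = 2 * \<bar>sin (pi * (u - of_int (grep M t \<theta> k)) / real M)\<bar>" .
  have cl: "\<bar>u - of_int (grep M t \<theta> k)\<bar> \<le> real M / 2" using grep_close[OF assms] by (simp add: u_def)
  have "\<bar>pi * (u - of_int (grep M t \<theta> k)) / real M\<bar> = pi * \<bar>u - of_int (grep M t \<theta> k)\<bar> / real M"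
    by (simp add: abs_mult)
  also have "\<dots> \<le> pi * (real M / 2) / real M"
    using cl assms by (intro divide_right_mono mult_left_mono) auto
  also have "\<dots> = pi / 2" using assms by simp
  finally have "\<bar>pi * (u - of_int (grep M t \<theta> k)) / real M\<bar> / 2 \<le> \<bar>sin (pi * (u - of_int (grep M t \<theta> k)) / real M)\<bar>"
    by (rule abs_sin_ge_half)
  hence "pi * \<bar>u - of_int (grep M t \<theta> k)\<bar> / real M \<le> norm (cis \<theta> - grid M t k)"
    using eq by (simp add: abs_mult)
  moreover have "2 * \<bar>u - of_int (grep M t \<theta> k)\<bar> / real M \<le> pi * \<bar>u - of_int (grep M t \<theta> k)\<bar> / real M"
    using pi_gt3 assms by (intro divide_right_mono mult_right_mono) auto
  ultimately show ?thesis by (simp add: u_def)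
qed

lemma ratio_bound:
  fixes S :: "nat set"
  assumes M: "M > 0" and S: "S \<subseteq> {..<M}" and j: "j \<in> S"
  shows "(\<Prod>k\<in>S-{j}. norm (cis \<theta> - grid M t k))
     \<le> (2*real M)^(M - card S) / fact (M - card S) * (\<Prod>k\<in>S-{j}. norm (grid M t j - grid M t k))"
proof -
  define U where "U = M - card S"
  define g where "g = grid M t"
  define z where "z = cis \<theta>"
  define u where "u = gu M t \<theta>"
  define r where "r = grep M t \<theta>"
  define D' where "D' = {..<M} - (S - {j})"
  have finS: "finite S" using S finite_subset by blast
  have cS: "card S \<le> M" using card_mono[OF _ S] by simp
  have cS1: "card S \<ge> 1" using j finS by (metis One_nat_def Suc_leI card_gt_0_iff empty_iff)
  have finD: "finite D'" by (simp add: D'_def)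
  have jD: "j \<in> D'" using j S by (auto simp: D'_def)
  have cD: "card D' = Suc U"
  proof -
    have "card D' = card {..<M} - card (S - {j})" unfolding D'_def
      by (rule card_Diff_subset) (use S finS in auto)
    also have "card (S - {j}) = card S - 1" using j finS by simp
    finally show ?thesis using cS cS1 by (simp add: U_def)
  qed
  have D'sub: "D' \<subseteq> {..<M}" by (auto simp: D'_def)
  have "Min ((\<lambda>e. \<bar>u - of_int (r e)\<bar>) ` D') \<in> (\<lambda>e. \<bar>u - of_int (r e)\<bar>) ` D'"
    using finD jD by (intro Min_in) auto
  then obtain d where dD: "d \<in> D'" and dmin0: "\<bar>u - of_int (r d)\<bar> = Min ((\<lambda>e. \<bar>u - of_int (r e)\<bar>) ` D')"
    by auto
  have dmin: "\<forall>e\<in>D'. \<bar>u - of_int (r d)\<bar> \<le> \<bar>u - of_int (r e)\<bar>"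
    using dmin0 finD by auto
  have dM: "d < M" using dD D'sub by auto
  have injr: "inj_on r D'" using grep_inj[OF M] D'sub unfolding r_def by (rule inj_on_subset)
  define B where "B = r ` (D' - {d})"
  have cB: "card B = U" unfolding B_def using cD dD finD
    by (subst card_image) (auto intro: inj_on_subset[OF injr])
  have finB: "finite B" using finD by (simp add: B_def)
  have b0: "r d \<notin> B" using injr dD by (auto simp: B_def inj_on_def)
  have "fact (card B) / 2^(card B) \<le> (\<Prod>b\<in>B. \<bar>u - of_int b\<bar>)"
    by (rule int_prod_bound[OF finB b0]) (use dmin in \<open>auto simp: B_def\<close>)
  also have "(\<Prod>b\<in>B. \<bar>u - of_int b\<bar>) = (\<Prod>e\<in>D' - {d}. \<bar>u - of_int (r e)\<bar>)"
    unfolding B_def by (subst prod.reindex) (auto intro: inj_on_subset[OF injr])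
  finally have ip: "fact U / 2^U \<le> (\<Prod>e\<in>D' - {d}. \<bar>u - of_int (r e)\<bar>)" using cB by simp
  define P2 where "P2 = (\<Prod>e\<in>D' - {d}. norm (z - g e))"
  have "(\<Prod>e\<in>D' - {d}. 2 / real M * \<bar>u - of_int (r e)\<bar>) \<le> P2"
    unfolding P2_def
  proof (rule prod_mono)
    fix e assume "e \<in> D' - {d}"
    show "0 \<le> 2 / real M * \<bar>u - of_int (r e)\<bar> \<and> 2 / real M * \<bar>u - of_int (r e)\<bar> \<le> norm (z - g e)"
      using grid_chord_lower[OF M, of t \<theta> e] by (simp add: u_def r_def z_def g_def)
  qed
  moreover have "(\<Prod>e\<in>D' - {d}. 2 / real M * \<bar>u - of_int (r e)\<bar>) = (2 / real M)^U * (\<Prod>e\<in>D' - {d}. \<bar>u - of_int (r e)\<bar>)"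
  proof -
    have "(\<Prod>e\<in>D' - {d}. 2 / real M * \<bar>u - of_int (r e)\<bar>) = (\<Prod>e\<in>D' - {d}. 2 / real M) * (\<Prod>e\<in>D' - {d}. \<bar>u - of_int (r e)\<bar>)"
      by (rule prod.distrib)
    moreover have "card (D' - {d}) = U" using cD dD finD by simp
    ultimately show ?thesis by simp
  qed
  ultimately have "(2 / real M)^U * (fact U / 2^U) \<le> P2"
    using ip by (smt (verit) mult_left_mono zero_le_divide_iff zero_le_power of_nat_0_le_iff)
  hence P2low: "fact U / real M ^ U \<le> P2" by (simp add: power_divide)
  have P2pos: "0 < fact U / real M ^ U" using M by simp
  define P1 where "P1 = (\<Prod>k\<in>S-{j}. norm (z - g k))"
  have split1: "(S - {j}) \<union> (D' - {d}) = {..<M} - {d}" using S dD by (auto simp: D'_def)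
  have "P1 * P2 = (\<Prod>k\<in>{..<M} - {d}. norm (z - g k))"
    unfolding P1_def P2_def split1[symmetric] using finS finD
    by (subst prod.union_disjoint) (auto simp: D'_def)
  also have "\<dots> = norm (\<Prod>k\<in>{..<M} - {d}. z - g k)" by (simp add: prod_norm)
  also have "\<dots> \<le> M" unfolding g_def z_def by (rule grid_prod_except_bound[OF M dM]) simp
  finally have P12: "P1 * P2 \<le> M" .
  have P1nn: "0 \<le> P1" by (simp add: P1_def prod_nonneg)
  have "P1 * (fact U / real M ^ U) \<le> P1 * P2" using P2low P1nn by (rule mult_left_mono)
  hence "P1 * (fact U / real M ^ U) \<le> M" using P12 by linarith
  hence P1up: "P1 \<le> real M * real M ^ U / fact U" using P2pos M by (simp add: field_simps)
  define Den where "Den = (\<Prod>k\<in>S-{j}. norm (g j - g k))"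
  define P3 where "P3 = (\<Prod>k\<in>{..<M} - S. norm (g j - g k))"
  have split2: "(S - {j}) \<union> ({..<M} - S) = {..<M} - {j}" using S j by auto
  have "Den * P3 = (\<Prod>k\<in>{..<M} - {j}. norm (g j - g k))"
    unfolding Den_def P3_def split2[symmetric] using finS
    by (subst prod.union_disjoint) auto
  also have "\<dots> = M" unfolding g_def using j S by (intro grid_prod_except_self[OF M]) auto
  finally have DP3: "Den * P3 = M" .
  have "P3 \<le> (\<Prod>k\<in>{..<M} - S. 2)" unfolding P3_def
  proof (rule prod_mono)
    fix k show "0 \<le> norm (g j - g k) \<and> norm (g j - g k) \<le> 2"
      using norm_triangle_ineq4[of "g j" "g k"] by (simp add: g_def)
  qed
  also have "\<dots> = 2 ^ U" using finS S by (simp add: U_def card_Diff_subset)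
  finally have P3up: "P3 \<le> 2 ^ U" .
  have P3pos: "0 < P3" using DP3 M
    by (metis mult_zero_right not_gr_zero of_nat_0_less_iff P3_def prod_nonneg norm_ge_zero order_le_less)
  have "real M \<le> Den * 2 ^ U"
    using DP3 P3up by (metis mult_left_mono Den_def prod_nonneg norm_ge_zero)
  hence "real M * real M ^ U / fact U \<le> (2 * real M) ^ U / fact U * Den"
    by (simp add: field_simps power_mult_distrib) (smt (verit) mult_left_mono mult.commute mult.assoc zero_le_power of_nat_0_le_iff)
  with P1up show ?thesis unfolding P1_def Den_def U_def g_def z_def by linarith
qed

lemma grid_interp:
  fixes p :: "complex poly"
  assumes M: "M > 0" and S: "S \<subseteq> {..<M}" and deg: "degree p < card S"
  shows "poly p z = (\<Sum>j\<in>S. poly p (grid M t j) * (\<Prod>k\<in>S-{j}. z - grid M t k) / (\<Prod>k\<in>S-{j}. grid M t j - grid M t k))"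
proof -
  define g where "g = grid M t"
  have finS: "finite S" using S finite_subset by blast
  have injg: "inj_on g S" using grid_inj[OF M] S unfolding g_def by (rule inj_on_subset)
  define q where "q = (\<Sum>j\<in>S. smult (poly p (g j) / (\<Prod>k\<in>S-{j}. g j - g k)) (\<Prod>k\<in>S-{j}. [:- g k, 1:]))"
  have degq: "degree q < card S"
  proof -
    have "degree q \<le> card S - 1" unfolding q_def
    proof (rule degree_sum_le[OF finS])
      fix j assume j: "j \<in> S"
      have "degree (smult (poly p (g j) / (\<Prod>k\<in>S-{j}. g j - g k)) (\<Prod>k\<in>S-{j}. [:- g k, 1:]))
            \<le> degree (\<Prod>k\<in>S-{j}. [:- g k, 1:])" by (rule degree_smult_le)
      also have "\<dots> \<le> sum (degree \<circ> (\<lambda>k. [:- g k, 1:])) (S - {j})"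
        by (rule degree_prod_sum_le) (use finS in simp)
      also have "\<dots> = card S - 1" using j finS by simp
      finally show "degree (smult (poly p (g j) / (\<Prod>k\<in>S-{j}. g j - g k)) (\<Prod>k\<in>S-{j}. [:- g k, 1:])) \<le> card S - 1" .
    qed
    moreover have "card S > 0" using deg by simp
    ultimately show ?thesis by linarith
  qed
  have "p = q"
  proof (rule poly_eqI_degree[where A = "g ` S"])
    show "degree p < card (g ` S)" using deg card_image[OF injg] by simp
    show "degree q < card (g ` S)" using degq card_image[OF injg] by simp
    fix x assume "x \<in> g ` S"
    then obtain i where i: "i \<in> S" "x = g i" by auto
    have nz: "(\<Prod>k\<in>S-{i}. g i - g k) \<noteq> 0"
      using injg i(1) finS by (auto simp: inj_on_def)
    have "poly q x = (\<Sum>j\<in>S. poly p (g j) / (\<Prod>k\<in>S-{j}. g j - g k) * (\<Prod>k\<in>S-{j}. g i - g k))"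
      by (simp add: q_def poly_sum poly_prod i(2))
    also have "\<dots> = poly p (g i) / (\<Prod>k\<in>S-{i}. g i - g k) * (\<Prod>k\<in>S-{i}. g i - g k)
        + (\<Sum>j\<in>S-{i}. poly p (g j) / (\<Prod>k\<in>S-{j}. g j - g k) * (\<Prod>k\<in>S-{j}. g i - g k))"
      using i(1) finS by (simp add: sum.remove)
    also have "(\<Sum>j\<in>S-{i}. poly p (g j) / (\<Prod>k\<in>S-{j}. g j - g k) * (\<Prod>k\<in>S-{j}. g i - g k)) = 0"
    proof (rule sum.neutral, rule ballI)
      fix j assume j: "j \<in> S - {i}"
      have "(\<Prod>k\<in>S-{j}. g i - g k) = 0" using j i(1) finS by (intro prod_zero) auto
      thus "poly p (g j) / (\<Prod>k\<in>S-{j}. g j - g k) * (\<Prod>k\<in>S-{j}. g i - g k) = 0" by simp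
    qed
    finally show "poly p x = poly q x" using nz i(2) by simp
  qed
  hence "poly p z = poly q z" by simp
  also have "\<dots> = (\<Sum>j\<in>S. poly p (g j) * (\<Prod>k\<in>S-{j}. z - g k) / (\<Prod>k\<in>S-{j}. g j - g k))"
    by (simp add: q_def poly_sum poly_prod)
  finally show ?thesis by (simp add: g_def)
qed

lemma grid_interp_bound:
  fixes p :: "complex poly" and Bd :: real
  assumes M: "M > 0" and S: "S \<subseteq> {..<M}" and deg: "degree p < card S"
    and B: "\<And>k. k \<in> S \<Longrightarrow> norm (poly p (grid M t k)) \<le> Bd"
  shows "norm (poly p (cis \<theta>)) \<le> real (card S) * Bd * ((2*real M)^(M - card S) / fact (M - card S))"
proof -
  define g where "g = grid M t"
  define C where "C = (2*real M)^(M - card S) / fact (M - card S)"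
  have finS: "finite S" using S finite_subset by blast
  have injg: "inj_on g S" using grid_inj[OF M] S unfolding g_def by (rule inj_on_subset)
  have "norm (poly p (cis \<theta>)) = norm (\<Sum>j\<in>S. poly p (g j) * (\<Prod>k\<in>S-{j}. cis \<theta> - g k) / (\<Prod>k\<in>S-{j}. g j - g k))"
    using grid_interp[OF M S deg] by (simp add: g_def)
  also have "\<dots> \<le> (\<Sum>j\<in>S. norm (poly p (g j) * (\<Prod>k\<in>S-{j}. cis \<theta> - g k) / (\<Prod>k\<in>S-{j}. g j - g k)))"
    by (rule norm_sum)
  also have "\<dots> \<le> (\<Sum>j\<in>S. Bd * C)"
  proof (rule sum_mono)
    fix j assume j: "j \<in> S"
    have Dpos: "0 < (\<Prod>k\<in>S-{j}. norm (g j - g k))"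
      using injg j finS by (intro prod_pos) (auto simp: inj_on_def)
    have rb: "(\<Prod>k\<in>S-{j}. norm (cis \<theta> - g k)) \<le> C * (\<Prod>k\<in>S-{j}. norm (g j - g k))"
      using ratio_bound[OF M S j, of \<theta> t] by (simp add: g_def C_def)
    have "norm (poly p (g j) * (\<Prod>k\<in>S-{j}. cis \<theta> - g k) / (\<Prod>k\<in>S-{j}. g j - g k))
        = norm (poly p (g j)) * ((\<Prod>k\<in>S-{j}. norm (cis \<theta> - g k)) / (\<Prod>k\<in>S-{j}. norm (g j - g k)))"
      by (simp add: norm_mult norm_divide prod_norm)
    also have "\<dots> \<le> Bd * C"
    proof -
      have h1: "norm (poly p (g j)) \<le> Bd" using B j by (simp add: g_def)
      have h2: "(\<Prod>k\<in>S-{j}. norm (cis \<theta> - g k)) / (\<Prod>k\<in>S-{j}. norm (g j - g k)) \<le> C"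
        using rb Dpos by (simp add: divide_le_eq)
      have h3: "0 \<le> Bd" using B j norm_ge_zero order.trans by blast
      have h4: "0 \<le> (\<Prod>k\<in>S-{j}. norm (cis \<theta> - g k)) / (\<Prod>k\<in>S-{j}. norm (g j - g k))"
        by (simp add: prod_nonneg)
      show ?thesis by (rule mult_mono[OF h1 h2 h3 h4])
    qed
    finally show "norm (poly p (g j) * (\<Prod>k\<in>S-{j}. cis \<theta> - g k) / (\<Prod>k\<in>S-{j}. g j - g k)) \<le> Bd * C" .
  qed
  also have "\<dots> = real (card S) * Bd * C" by simp
  finally show ?thesis by (simp add: C_def)
qed

definition cpoly :: "real poly \<Rightarrow> nat \<Rightarrow> complex poly" where
  "cpoly Q n = (\<Sum>j\<le>n. smult (complex_of_real (coeff Q j)) ([:1/2, 0, 1/2:]^j * monom 1 (n - j)))"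

lemma cpoly_degree: "degree (cpoly Q n) \<le> 2 * n"
  unfolding cpoly_def
proof (rule degree_sum_le)
  fix j assume j: "j \<in> {..n}"
  have "degree (smult (complex_of_real (coeff Q j)) ([:1/2, 0, 1/2:]^j * monom 1 (n - j)))
      \<le> degree ([:1/2, 0, 1/2:]^j * monom (1::complex) (n - j))" by (rule degree_smult_le)
  also have "\<dots> \<le> degree ([:1/2, 0, 1/2:]^j :: complex poly) + degree (monom (1::complex) (n - j))"
    by (rule degree_mult_le)
  also have "degree ([:1/2, 0, 1/2:]^j :: complex poly) \<le> degree ([:1/2, 0, 1/2:] :: complex poly) * j"
    by (rule degree_power_le)
  also have "degree ([:1/2, 0, 1/2:] :: complex poly) = 2" by simp
  also have "degree (monom (1::complex) (n - j)) \<le> n - j" by (rule degree_monom_le)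
  finally show "degree (smult (complex_of_real (coeff Q j)) ([:1/2, 0, 1/2:]^j * monom 1 (n - j))) \<le> 2 * n"
    using j by simp
qed simp

lemma cis_half_sq: "(1/2 + cis \<theta> * cis \<theta> / 2 :: complex) = cis \<theta> * complex_of_real (cos \<theta>)"
proof -
  have c: "cos (\<theta> * 2) = 2 * cos \<theta> * cos \<theta> - 1" using cos_double_cos[of \<theta>] by (simp add: mult.commute power2_eq_square)
  show ?thesis
    by (simp add: complex_eq_iff power2_eq_square field_simps cis.sel c flip: cos_add sin_add)
qed

lemma cpoly_eval:
  assumes "degree Q \<le> n"
  shows "poly (cpoly Q n) (cis \<theta>) = cis \<theta> ^ n * complex_of_real (poly Q (cos \<theta>))"
proof -
  define w where "w = cis \<theta>"
  have "poly (cpoly Q n) w = (\<Sum>j\<le>n. complex_of_real (coeff Q j) * ((1/2 + w * w / 2) ^ j * w ^ (n - j)))"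
    by (simp add: cpoly_def poly_sum poly_monom)
  also have "\<dots> = (\<Sum>j\<le>n. w ^ n * complex_of_real (coeff Q j * cos \<theta> ^ j))"
  proof (rule sum.cong[OF refl])
    fix j assume j: "j \<in> {..n}"
    have "(1/2 + w * w / 2) ^ j * w ^ (n - j) = (w * complex_of_real (cos \<theta>)) ^ j * w ^ (n - j)"
      by (simp add: w_def cis_half_sq)
    also have "\<dots> = w ^ n * complex_of_real (cos \<theta>) ^ j"
      using j by (simp add: power_mult_distrib power_add[symmetric] mult_ac)
    finally show "complex_of_real (coeff Q j) * ((1/2 + w * w / 2) ^ j * w ^ (n - j)) = w ^ n * complex_of_real (coeff Q j * cos \<theta> ^ j)"
      by simp
  qed
  also have "\<dots> = w ^ n * complex_of_real (\<Sum>j\<le>n. coeff Q j * cos \<theta> ^ j)"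
    by (simp add: sum_distrib_left)
  also have "(\<Sum>j\<le>n. coeff Q j * cos \<theta> ^ j) = poly Q (cos \<theta>)"
  proof -
    have "(\<Sum>j\<le>n. coeff Q j * cos \<theta> ^ j) = (\<Sum>j\<le>degree Q. coeff Q j * cos \<theta> ^ j)"
      by (rule sum.mono_neutral_right) (use assms in \<open>auto simp: coeff_eq_0\<close>)
    thus ?thesis by (simp add: poly_altdef)
  qed
  finally show ?thesis by (simp add: w_def)
qed

lemma cpoly_norm:
  assumes "degree Q \<le> n"
  shows "norm (poly (cpoly Q n) (cis \<theta>)) = \<bar>poly Q (cos \<theta>)\<bar>"
  using cpoly_eval[OF assms] by (simp add: norm_mult norm_power)

lemma averaging:
  fixes B :: "real set" and K M :: nat
  assumes B[measurable]: "B \<in> sets borel" and M: "M > 0"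
    and le: "emeasure lborel B < ennreal ((real K + 1) * (2*pi/M))"
  shows "\<exists>t. 0 \<le> t \<and> t < 2*pi/M \<and> card {k \<in> {..<M}. t + 2*pi*real k/M \<in> B} \<le> K"
proof (rule ccontr)
  assume nt: "\<not> ?thesis"
  define h where "h = 2*pi/M"
  have hpos: "h > 0" using M by (simp add: h_def)
  define f where "f k t = (indicator B (t + real k * h) * indicator {0..<h} t :: ennreal)" for k t
  have fm: "f k \<in> borel_measurable lborel" for k unfolding f_def by measurable
  define I where "I k = {real k * h..<real k * h + h}" for k
  have intk: "(\<integral>\<^sup>+t. f k t \<partial>lborel) = emeasure lborel (B \<inter> I k)" for k
  proof -
    have "emeasure lborel (B \<inter> I k) = (\<integral>\<^sup>+x. indicator (B \<inter> I k) x \<partial>lborel)"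
      by (simp add: I_def)
    also have "\<dots> = ennreal \<bar>1\<bar> * (\<integral>\<^sup>+x. indicator (B \<inter> I k) (real k * h + 1 * x) \<partial>lborel)"
      by (rule nn_integral_real_affine) (auto simp: I_def)
    also have "(\<lambda>x. indicator (B \<inter> I k) (real k * h + 1 * x) :: ennreal) = f k"
      by (auto simp: f_def I_def indicator_def add.commute)
    finally show ?thesis by simp
  qed
  have "(\<integral>\<^sup>+t. (\<Sum>k<M. f k t) \<partial>lborel) = (\<Sum>k<M. \<integral>\<^sup>+t. f k t \<partial>lborel)"
    by (rule nn_integral_sum) (rule fm)
  also have "\<dots> = (\<Sum>k<M. emeasure lborel (B \<inter> I k))" using intk by simp
  also have "\<dots> = emeasure lborel (\<Union>k<M. B \<inter> I k)"
  proof (rule sum_emeasure)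
    show "(\<lambda>k. B \<inter> I k) ` {..<M} \<subseteq> sets lborel" by (auto simp: I_def)
    show "disjoint_family_on (\<lambda>k. B \<inter> I k) {..<M}"
    proof (unfold disjoint_family_on_def, intro ballI impI)
      fix k l :: nat assume "k \<noteq> l"
      show "B \<inter> I k \<inter> (B \<inter> I l) = {}"
      proof (rule ccontr)
        assume "B \<inter> I k \<inter> (B \<inter> I l) \<noteq> {}"
        then obtain x where x: "x \<in> I k" "x \<in> I l" by auto
        have "real k * h < real l * h + h" "real l * h < real k * h + h" using x by (auto simp: I_def)
        hence "h * real k < h * (real l + 1)" "h * real l < h * (real k + 1)" by (simp_all add: algebra_simps)
        hence "real k < real l + 1" "real l < real k + 1" using hpos mult_less_cancel_left_pos by blast+
        thus False using \<open>k \<noteq> l\<close> by linarith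
      qed
    qed
  qed simp
  also have "\<dots> \<le> emeasure lborel B" by (rule emeasure_mono) auto
  finally have up: "(\<integral>\<^sup>+t. (\<Sum>k<M. f k t) \<partial>lborel) \<le> emeasure lborel B" .
  have low: "(\<integral>\<^sup>+t. ennreal (real K + 1) * indicator {0..<h} t \<partial>lborel) \<le> (\<integral>\<^sup>+t. (\<Sum>k<M. f k t) \<partial>lborel)"
  proof (rule nn_integral_mono)
    fix t
    show "ennreal (real K + 1) * indicator {0..<h} t \<le> (\<Sum>k<M. f k t)"
    proof (cases "0 \<le> t \<and> t < h")
      case True
      have c: "K + 1 \<le> card {k \<in> {..<M}. t + 2*pi*real k/M \<in> B}" using nt True by (auto simp: h_def)
      have "(\<Sum>k<M. f k t) = (\<Sum>k<M. indicator {k. t + 2*pi*real k/M \<in> B} k)"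
        using True by (intro sum.cong refl) (simp add: f_def h_def indicator_def mult.commute)
      also have "\<dots> = (\<Sum>k<M. of_nat (indicator {k. t + 2*pi*real k/M \<in> B} k :: nat))"
        by (intro sum.cong refl) (simp add: indicator_def)
      also have "\<dots> = of_nat (\<Sum>k<M. indicator {k. t + 2*pi*real k/M \<in> B} k :: nat)"
        by (rule of_nat_sum[symmetric])
      also have "(\<Sum>k<M. indicator {k. t + 2*pi*real k/M \<in> B} k :: nat) = card ({..<M} \<inter> {k. t + 2*pi*real k/M \<in> B})"
        by (rule sum_indicator_eq_card) simp
      also have "{..<M} \<inter> {k. t + 2*pi*real k/M \<in> B} = {k \<in> {..<M}. t + 2*pi*real k/M \<in> B}" by auto
      finally have "(\<Sum>k<M. f k t) = of_nat (card {k \<in> {..<M}. t + 2*pi*real k/M \<in> B})" .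
      moreover have "ennreal (real K + 1) \<le> of_nat (card {k \<in> {..<M}. t + 2*pi*real k/M \<in> B})"
      proof -
        have e: "ennreal (real K + 1) = of_nat (Suc K)" using ennreal_of_nat_eq_real_of_nat[of "Suc K"] by simp
        show ?thesis unfolding e using c by (simp only: Suc_eq_plus1 of_nat_le_iff)
      qed
      ultimately show ?thesis using True by simp
    next
      case False
      hence "indicator {0..<h} t = (0::ennreal)" by (auto simp: indicator_def)
      thus ?thesis by simp
    qed
  qed
  have "(\<integral>\<^sup>+t. ennreal (real K + 1) * indicator {0..<h} t \<partial>lborel) = ennreal (real K + 1) * ennreal h"
    using hpos by (simp add: nn_integral_cmult_indicator)
  also have "\<dots> = ennreal ((real K + 1) * (2*pi/M))"
    by (subst ennreal_mult[symmetric]) (auto simp: h_def)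
  finally have "ennreal ((real K + 1) * (2*pi/M)) \<le> emeasure lborel B" using low up by simp
  thus False using le by simp
qed

lemma poly_cos_meas[measurable]: "(\<lambda>x. poly Q (cos x)) \<in> borel_measurable (borel :: real measure)"
  for Q :: "real poly"
  by (intro borel_measurable_continuous_onI continuous_intros)

lemma core_bound:
  fixes Q :: "real poly" and b x :: real and n U :: nat
  assumes deg: "degree Q \<le> n" and b: "b > 0"
    and meas: "emeasure lborel {\<phi>\<in>{0..<2*pi}. b^n \<le> \<bar>poly Q (cos \<phi>)\<bar>} < ennreal ((real U + 1) * (2*pi/real (2*n+1+U)))"
    and x: "x \<in> {-1..1}"
  shows "\<bar>poly Q x\<bar> \<le> real (2*n+1) * b^n * ((2*real (2*n+1+U))^U / fact U)"
proof -
  define M where "M = 2*n+1+U"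
  have M0: "M > 0" by (simp add: M_def)
  define B' where "B' = {\<phi>\<in>{0..<2*pi}. b^n \<le> \<bar>poly Q (cos \<phi>)\<bar>}"
  have B'm: "B' \<in> sets borel" unfolding B'_def by measurable
  obtain t where t0: "0 \<le> t" and t1: "t < 2*pi/M" and tc: "card {k \<in> {..<M}. t + 2*pi*real k/M \<in> B'} \<le> U"
    using averaging[OF B'm M0, of U] meas by (auto simp: B'_def M_def)
  define Bad where "Bad = {k \<in> {..<M}. t + 2*pi*real k/M \<in> B'}"
  define G where "G = {..<M} - Bad"
  have "card G = M - card Bad" unfolding G_def by (subst card_Diff_subset) (auto simp: Bad_def)
  hence "2*n+1 \<le> card G" using tc by (simp add: Bad_def M_def)
  then obtain S where SG: "S \<subseteq> G" and cS: "card S = 2*n+1" and finS: "finite S"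
    by (rule obtain_subset_with_card_n)
  have S: "S \<subseteq> {..<M}" using SG by (auto simp: G_def)
  define p where "p = cpoly Q n"
  have degp: "degree p < card S" using cpoly_degree[of Q n] cS by (simp add: p_def)
  have Bd: "norm (poly p (grid M t k)) \<le> b^n" if k: "k \<in> S" for k
  proof -
    define \<phi> where "\<phi> = t + 2*pi*real k/M"
    have kM: "k < M" and nb: "\<phi> \<notin> B'" using k SG by (auto simp: G_def Bad_def \<phi>_def)
    have "real k + 1 \<le> real M" using kM by simp
    hence "2*pi*(real k + 1)/M \<le> 2*pi*real M/M" using M0 by (intro divide_right_mono mult_left_mono) auto
    hence "2*pi*real k/M + 2*pi/M \<le> 2*pi" using M0 by (simp add: field_simps)
    hence "\<phi> < 2*pi" using t1 by (simp add: \<phi>_def)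
    moreover have "0 \<le> \<phi>" using t0 by (simp add: \<phi>_def)
    ultimately have "\<bar>poly Q (cos \<phi>)\<bar> < b^n" using nb by (auto simp: B'_def)
    moreover have "grid M t k = cis \<phi>" by (simp add: grid_def \<phi>_def)
    ultimately show ?thesis using cpoly_norm[OF deg] by (simp add: p_def)
  qed
  have "norm (poly p (cis (arccos x))) \<le> real (card S) * b^n * ((2*real M)^(M - card S) / fact (M - card S))"
    by (rule grid_interp_bound[OF M0 S degp Bd])
  moreover have "norm (poly p (cis (arccos x))) = \<bar>poly Q x\<bar>"
    using cpoly_norm[OF deg, of "arccos x"] x by (simp add: p_def cos_arccos)
  moreover have "M - card S = U" by (simp add: cS M_def)
  ultimately show ?thesis using cS by (simp add: M_def)
qed

lemma pow_div_fact_le_exp: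
  fixes x :: real assumes "0 \<le> x"
  shows "x ^ n / fact n \<le> exp x"
proof -
  have s: "summable (\<lambda>m. x ^ m /\<^sub>R fact m)" using exp_converges[of x] by (rule sums_summable)
  have "sum (\<lambda>m. x ^ m /\<^sub>R fact m) {n} \<le> suminf (\<lambda>m. x ^ m /\<^sub>R fact m)"
    by (rule sum_le_suminf[OF s]) (use assms in auto)
  thus ?thesis by (simp add: exp_def divide_inverse mult.commute)
qed

lemma lebesgue_borel_eq: "S \<in> sets borel \<Longrightarrow> emeasure lebesgue S = emeasure lborel (S :: real set)"
  by simp

lemma bad_measure:
  fixes Q :: "real poly" and b c :: real and n :: nat
  assumes big: "emeasure lebesgue {\<theta>\<in>{0<..<pi}. \<bar>poly Q (cos \<theta>)\<bar> < b^n} > ennreal c"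
  shows "emeasure lborel {\<phi>\<in>{0..<2*pi}. b^n \<le> \<bar>poly Q (cos \<phi>)\<bar>} < ennreal (2*(pi - c))"
proof -
  define E where "E = {\<theta>\<in>{0<..<pi}. \<bar>poly Q (cos \<theta>)\<bar> < b^n}"
  define B1 where "B1 = {\<theta>\<in>{0<..<pi}. b^n \<le> \<bar>poly Q (cos \<theta>)\<bar>}"
  define B2 where "B2 = {\<theta>\<in>{pi<..<2*pi}. b^n \<le> \<bar>poly Q (cos \<theta>)\<bar>}"
  define B' where "B' = {\<phi>\<in>{0..<2*pi}. b^n \<le> \<bar>poly Q (cos \<phi>)\<bar>}"
  have mE[measurable]: "E \<in> sets borel" unfolding E_def by measurable
  have mB1[measurable]: "B1 \<in> sets borel" unfolding B1_def by measurable
  have mB2[measurable]: "B2 \<in> sets borel" unfolding B2_def by measurable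
  have mB'[measurable]: "B' \<in> sets borel" unfolding B'_def by measurable
  have un: "E \<union> B1 = {0<..<pi}" "E \<inter> B1 = {}" by (auto simp: E_def B1_def)
  have sumEB: "emeasure lborel E + emeasure lborel B1 = ennreal pi"
    using plus_emeasure[of E lborel B1] un by simp
  have finE: "emeasure lborel E \<noteq> top" and finB1: "emeasure lborel B1 \<noteq> top"
  proof -
    have "emeasure lborel E \<le> emeasure lborel {0<..<pi}" by (rule emeasure_mono) (auto simp: E_def)
    thus "emeasure lborel E \<noteq> top" by (auto simp: top_unique)
    have "emeasure lborel B1 \<le> emeasure lborel {0<..<pi}" by (rule emeasure_mono) (auto simp: B1_def)
    thus "emeasure lborel B1 \<noteq> top" by (auto simp: top_unique)
  qed
  have bigE0: "ennreal c < emeasure lebesgue E" using big by (simp only: E_def)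
  have "emeasure lebesgue E = emeasure lborel E" using mE by (rule lebesgue_borel_eq)
  hence "ennreal c < emeasure lborel E" using bigE0 by simp
  hence "ennreal c < ennreal (measure lborel E)"
    using finE by (simp add: emeasure_eq_ennreal_measure)
  hence cE: "c < measure lborel E"
  proof (cases "c \<ge> 0")
    case True thus ?thesis using \<open>ennreal c < ennreal (measure lborel E)\<close> by (simp add: ennreal_less_iff)
  next
    case False thus ?thesis using measure_nonneg[of lborel E] by linarith
  qed
  have eE: "emeasure lborel E = ennreal (measure lborel E)" using finE by (rule emeasure_eq_ennreal_measure)
  have eB1: "emeasure lborel B1 = ennreal (measure lborel B1)" using finB1 by (rule emeasure_eq_ennreal_measure)
  have "ennreal (measure lborel E) + ennreal (measure lborel B1) = ennreal pi"
    using sumEB unfolding eE eB1 .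
  hence "ennreal (measure lborel E + measure lborel B1) = ennreal pi"
    by (subst ennreal_plus) auto
  hence "measure lborel E + measure lborel B1 = pi" by (subst (asm) ennreal_inj) auto
  with cE have m1: "measure lborel B1 < pi - c" by linarith
  have B2eq: "B2 = (\<lambda>x. (-1) *\<^sub>R x + 2*pi) ` B1"
  proof (rule set_eqI, rule iffI)
    fix y assume "y \<in> B2"
    hence "2*pi - y \<in> B1" by (auto simp: B2_def B1_def)
    moreover have "y = (-1) *\<^sub>R (2*pi - y) + 2*pi" by simp
    ultimately show "y \<in> (\<lambda>x. (-1) *\<^sub>R x + 2*pi) ` B1" by blast
  next
    fix y assume "y \<in> (\<lambda>x. (-1) *\<^sub>R x + 2*pi) ` B1"
    then obtain x where "x \<in> B1" "y = 2*pi - x" by auto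
    thus "y \<in> B2" by (auto simp: B2_def B1_def)
  qed
  have eB2: "emeasure lborel B2 = emeasure lborel B1"
  proof -
    have "emeasure lebesgue B2 = emeasure lebesgue B1"
      unfolding B2eq using emeasure_lebesgue_affine[of "-1" "2*pi" B1] by simp
    thus ?thesis by simp
  qed
  have sub: "B' \<subseteq> (B1 \<union> B2) \<union> {0, pi}"
  proof
    fix y assume y: "y \<in> B'"
    show "y \<in> (B1 \<union> B2) \<union> {0, pi}"
    proof (cases "y = 0 \<or> y = pi")
      case True thus ?thesis by auto
    next
      case False thus ?thesis using y by (auto simp: B'_def B1_def B2_def)
    qed
  qed
  have "emeasure lborel B' \<le> emeasure lborel ((B1 \<union> B2) \<union> {0, pi})"
    by (rule emeasure_mono[OF sub]) simp
  also have "\<dots> \<le> emeasure lborel (B1 \<union> B2) + emeasure lborel {0, pi}"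
    by (rule emeasure_subadditive) auto
  also have "emeasure lborel {0, pi::real} = 0" by (rule emeasure_lborel_countable) simp
  also have "emeasure lborel (B1 \<union> B2) \<le> emeasure lborel B1 + emeasure lborel B2"
    by (rule emeasure_subadditive) auto
  also have "emeasure lborel B1 + emeasure lborel B2 = ennreal (2 * measure lborel B1)"
    using eB2 finB1 by (simp add: emeasure_eq_ennreal_measure ennreal_plus[symmetric])
  also have "\<dots> < ennreal (2*(pi - c))"
  proof (rule ennreal_lessI)
    have "0 \<le> measure lborel B1" by (rule measure_nonneg)
    hence "0 < pi - c" using m1 by linarith
    thus "0 < 2*(pi - c)" by simp
    show "2 * measure lborel B1 < 2*(pi - c)" using m1 by (simp add: mult_strict_left_mono)
  qed
  finally show ?thesis by (simp add: B'_def)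
qed

lemma numeric:
  fixes r L \<mu> A :: real and q n U :: nat
  assumes r: "r > 1" and L: "L = ln r" and mu: "\<mu> = L / 24" and A: "A = max 0 (ln (2/\<mu>))"
    and q: "q = nat \<lceil>12*A/L\<rceil> + 4" and n: "real n > 48 / L^2" and U: "U = (2*n+1) div (q - 1)"
  shows "real (2*n+1) * ((2*real (2*n+1+U))^U / fact U) < r^n"
proof -
  have L0: "L > 0" using r L by simp
  have mu0: "\<mu> > 0" using L0 mu by simp
  have A0: "A \<ge> 0" using A by simp
  have n1: "n \<ge> 1"
  proof (rule ccontr)
    assume "\<not> n \<ge> 1" hence "n = 0" by simp
    with n have "48 / L^2 < 0" by simp
    moreover have "48 / L^2 \<ge> 0" by simp
    ultimately show False by linarith
  qed
  have q4: "q \<ge> 4" using q by simp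
  have qL: "12 * A \<le> (real q - 1) * L"
  proof -
    have "12*A/L \<le> real (nat \<lceil>12*A/L\<rceil>)" by linarith
    also have "\<dots> \<le> real q - 1" using q by simp
    finally have "12*A/L \<le> real q - 1" .
    thus ?thesis using L0 by (simp add: field_simps)
  qed
  define M where "M = 2*n+1+U"
  have Uq: "real U * (real q - 1) \<le> real (2*n+1)"
  proof -
    have "U * (q - 1) \<le> 2*n+1" unfolding U by (rule div_times_less_eq_dividend)
    hence "real (U * (q - 1)) \<le> real (2*n+1)" by (simp only: of_nat_le_iff)
    thus ?thesis using q4 by (simp add: of_nat_diff)
  qed
  have "real U * 3 \<le> real U * (real q - 1)" using q4 by (intro mult_left_mono) auto
  hence U3: "real U * 3 \<le> real (2*n+1)" using Uq by linarith
  have M4: "real M \<le> 4 * real n" using U3 n1 by (simp add: M_def)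
  have "(2*real M)^U / fact U = (2/\<mu>)^U * ((\<mu> * real M)^U / fact U)"
    using mu0 by (simp add: power_mult_distrib power_divide field_simps)
  also have "\<dots> \<le> (2/\<mu>)^U * exp (\<mu> * real M)"
    using mu0 by (intro mult_left_mono pow_div_fact_le_exp) auto
  also have "(2/\<mu>)^U = exp (real U * ln (2/\<mu>))"
    using mu0 by (simp add: exp_of_nat_mult)
  also have "exp (real U * ln (2/\<mu>)) * exp (\<mu> * real M) \<le> exp (L/4) ^ n * exp (L/4) ^ n"
  proof (rule mult_mono)
    have "real U * ln (2/\<mu>) \<le> real U * A" using A by (intro mult_left_mono) auto
    also have "\<dots> \<le> real n * L / 4"
    proof -
      have "real U * A * (real q - 1) \<le> real (2*n+1) * A"
        using mult_right_mono[OF Uq A0] by (simp add: mult_ac)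
      also have "\<dots> \<le> 3 * real n * A" using n1 A0 by (intro mult_right_mono) auto
      also have "\<dots> \<le> real n * L / 4 * (real q - 1)"
      proof -
        have "real n / 4 * (12 * A) \<le> real n / 4 * ((real q - 1) * L)" using qL by (intro mult_left_mono) auto
        moreover have "3 * real n * A = real n / 4 * (12 * A)" by simp
        moreover have "real n * L / 4 * (real q - 1) = real n / 4 * ((real q - 1) * L)" by simp
        ultimately show ?thesis by (simp add: mult_ac)
      qed
      finally have "real U * A * (real q - 1) \<le> real n * L / 4 * (real q - 1)" .
      thus ?thesis using q4 by (simp add: mult_le_cancel_right)
    qed
    finally have "real U * ln (2/\<mu>) \<le> real n * (L/4)" by simp
    thus "exp (real U * ln (2/\<mu>)) \<le> exp (L/4) ^ n" by (simp only: exp_of_nat_mult[symmetric] exp_le_cancel_iff)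
    have "\<mu> * real M \<le> \<mu> * (4 * real n)" using M4 mu0 by (intro mult_left_mono) auto
    also have "\<dots> \<le> real n * (L/4)"
    proof -
      have "0 \<le> L * real n" using L0 by simp
      moreover have "\<mu> * (4 * real n) = (L * real n) / 6" by (simp add: mu)
      moreover have "real n * (L/4) = (L * real n) / 4" by simp
      ultimately show ?thesis by linarith
    qed
    finally show "exp (\<mu> * real M) \<le> exp (L/4) ^ n" by (simp only: exp_of_nat_mult[symmetric] exp_le_cancel_iff)
  qed auto
  also have "exp (L/4) ^ n * exp (L/4) ^ n = exp (L/2) ^ n"
  proof -
    have "exp (L/4) * exp (L/4) = exp (L/2)" by (simp add: mult_exp_exp)
    thus ?thesis by (metis power_mult_distrib)
  qed
  finally have F: "(2*real M)^U / fact U \<le> exp (L/2) ^ n" .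
  have "(real n * (L/2))^2 / fact 2 \<le> exp (real n * (L/2))" using L0 by (intro pow_div_fact_le_exp) auto
  moreover have "(real n * (L/2))^2 / fact 2 = real n * (real n * L^2) / 8"
    by (simp add: power_mult_distrib power2_eq_square)
  moreover have "exp (real n * (L/2)) = exp (L/2) ^ n" by (rule exp_of_nat_mult)
  ultimately have e2: "real n * (real n * L^2) / 8 \<le> exp (L/2) ^ n" by simp
  have L2: "L^2 > 0" using L0 by simp
  have "48 / L^2 * L^2 < real n * L^2" using n L2 by (intro mult_strict_right_mono) auto
  hence "48 < real n * L^2" using L2 by simp
  hence "real n * 48 < real n * (real n * L^2)" using n1 by (intro mult_strict_left_mono) auto
  hence "real (2*n+1) < exp (L/2) ^ n" using e2 n1 by linarith
  hence P: "real (2*n+1) * exp (L/2) ^ n < exp (L/2) ^ n * exp (L/2) ^ n"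
    by (intro mult_strict_right_mono) auto
  have "exp (L/2) ^ n * exp (L/2) ^ n = r ^ n"
  proof -
    have "exp (L/2) * exp (L/2) = r" using r L by (simp add: mult_exp_exp)
    thus ?thesis by (metis power_mult_distrib)
  qed
  moreover have "real (2*n+1) * ((2*real M)^U / fact U) \<le> real (2*n+1) * exp (L/2) ^ n"
    using F by (intro mult_left_mono) auto
  ultimately show ?thesis using P by (simp add: M_def)
qed

theorem theorem8:
  fixes r :: real
  assumes "r > 1"
  shows "\<exists>n0::nat. \<forall>a b :: real. 0 < b \<and> a = r * b \<longrightarrow>
           (\<exists>c. c < pi \<and>
              (\<forall>n::nat. n > n0 \<longrightarrow>
                 (\<forall>Q :: real poly. degree Q = n \<and>
                     (\<exists>z0\<in>{-1..1}. \<bar>poly Q z0\<bar> = a ^ n) \<longrightarrow>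
                   emeasure lebesgue {\<theta>\<in>{0<..<pi}. \<bar>poly Q (cos \<theta>)\<bar> < b ^ n}
                     \<le> ennreal c)))"
proof -
  define L where "L = ln r"
  define \<mu> where "\<mu> = L / 24"
  define A where "A = max 0 (ln (2/\<mu>))"
  define q where "q = nat \<lceil>12*A/L\<rceil> + 4"
  define n0 where "n0 = nat \<lceil>48 / L^2\<rceil>"
  have q4: "q \<ge> 4" by (simp add: q_def)
  show ?thesis
  proof (intro exI[of _ n0] allI impI)
    fix a b :: real assume ab: "0 < b \<and> a = r * b"
    hence b0: "b > 0" and a: "a = r * b" by auto
    show "\<exists>c. c < pi \<and> (\<forall>n::nat. n > n0 \<longrightarrow> (\<forall>Q :: real poly. degree Q = n \<and>
           (\<exists>z0\<in>{-1..1}. \<bar>poly Q z0\<bar> = a ^ n) \<longrightarrow>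
           emeasure lebesgue {\<theta>\<in>{0<..<pi}. \<bar>poly Q (cos \<theta>)\<bar> < b ^ n} \<le> ennreal c))"
    proof (intro exI[of _ "pi - pi / real q"] conjI allI impI)
      show "pi - pi / real q < pi" using q4 by simp
      fix n :: nat and Q :: "real poly"
      assume nn0: "n0 < n"
        and hQ: "degree Q = n \<and> (\<exists>z0\<in>{-1..1}. \<bar>poly Q z0\<bar> = a ^ n)"
      obtain z0 where z0: "z0 \<in> {-1..1}" "\<bar>poly Q z0\<bar> = a ^ n" using hQ by auto
      have degQ: "degree Q \<le> n" using hQ by simp
      show "emeasure lebesgue {\<theta>\<in>{0<..<pi}. \<bar>poly Q (cos \<theta>)\<bar> < b ^ n} \<le> ennreal (pi - pi / real q)"
      proof (rule ccontr)
        assume "\<not> ?thesis"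
        hence big: "emeasure lebesgue {\<theta>\<in>{0<..<pi}. \<bar>poly Q (cos \<theta>)\<bar> < b ^ n} > ennreal (pi - pi / real q)"
          by (simp add: not_le)
        have bm: "emeasure lborel {\<phi>\<in>{0..<2*pi}. b^n \<le> \<bar>poly Q (cos \<phi>)\<bar>} < ennreal (2*(pi - (pi - pi / real q)))"
          by (rule bad_measure[OF big])
        define U where "U = (2*n+1) div (q - 1)"
        define M where "M = 2*n+1+U"
        have MqU: "M \<le> q * (U + 1)"
        proof -
          define d where "d = q - 1"
          have qd: "q = d + 1" using q4 by (simp add: d_def)
          have dm: "U * d + (2*n+1) mod d = 2*n+1" unfolding U_def d_def by (rule div_mult_mod_eq)
          have md: "(2*n+1) mod d < d" using q4 by (simp add: d_def)
          have "q * (U + 1) = U * d + d + U + 1" by (simp add: qd algebra_simps)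
          thus ?thesis using dm md by (simp add: M_def)
        qed
        have "2*(pi - (pi - pi / real q)) = 2*pi / real q" by simp
        also have "\<dots> \<le> (real U + 1) * (2*pi/real M)"
        proof -
          have "real M \<le> real q * (real U + 1)" using MqU by (metis of_nat_1 of_nat_add of_nat_le_iff of_nat_mult)
          hence "2*pi * real M \<le> 2*pi * (real q * (real U + 1))" by (intro mult_left_mono) auto
          moreover have "real q > 0" "real M > 0" using q4 by (auto simp: M_def)
          ultimately show ?thesis by (simp add: field_simps)
        qed
        finally have "ennreal (2*(pi - (pi - pi / real q))) \<le> ennreal ((real U + 1) * (2*pi/real M))"
          by (rule ennreal_leI)
        with bm have meas0: "emeasure lborel {\<phi>\<in>{0..<2*pi}. b^n \<le> \<bar>poly Q (cos \<phi>)\<bar>} < ennreal ((real U + 1) * (2*pi/real M))"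
          by (rule order.strict_trans2)
        hence meas: "emeasure lborel {\<phi>\<in>{0..<2*pi}. b^n \<le> \<bar>poly Q (cos \<phi>)\<bar>} < ennreal ((real U + 1) * (2*pi/real (2*n+1+U)))"
          by (simp only: M_def)
        have cb: "\<bar>poly Q z0\<bar> \<le> real (2*n+1) * b^n * ((2*real (2*n+1+U))^U / fact U)"
          by (rule core_bound[OF degQ b0 meas z0(1)])
        have nL: "real n > 48 / L^2"
        proof -
          have "48 / L^2 \<le> real (nat \<lceil>48 / L^2\<rceil>)" by linarith
          also have "\<dots> < real n" using nn0 by (simp add: n0_def)
          finally show ?thesis .
        qed
        have num: "real (2*n+1) * ((2*real (2*n+1+U))^U / fact U) < r^n"
          by (rule numeric[OF assms L_def \<mu>_def A_def q_def nL U_def])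
        have "r^n * b^n = a^n" by (simp add: a power_mult_distrib)
        also have "\<dots> \<le> real (2*n+1) * ((2*real (2*n+1+U))^U / fact U) * b^n"
          using cb z0(2) by (simp add: mult_ac)
        finally have "r^n * b^n \<le> real (2*n+1) * ((2*real (2*n+1+U))^U / fact U) * b^n" .
        moreover have "0 < b^n" using b0 by simp
        ultimately have "r^n \<le> real (2*n+1) * ((2*real (2*n+1+U))^U / fact U)"
          by (simp only: mult_le_cancel_right_pos)
        thus False using num by linarith
      qed
    qed
  qed
qed

end
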